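(* Let $\mathbb{k}$ be a field, $m\ge2$, and $f_1,\dots,f_m\in\mathbb{k}[x_1,\dots,x_n]$ with $\gcd(f_1,\dots,f_m)=1$. Then there exists an infinite sequence $\{h_i\}_{i\ge1}$ of elements of the ideal $(f_1,\dots,f_m)$ such that $\gcd(h_i,h_j)=1$ for all $i\ne j$. *)

theory Defs
  imports "HOL-Library.Poly_Mapping"
begin

(* Multivariate polynomials over a field 'a are represented as finitely supported
maps from monomials (exponent vectors nat \<Rightarrow>\<^sub>0 nat) to coefficients. The polynomial
ring k[x_1,...,x_n] is the subring of those polynomials only involving variables 0..n-1. *)

type_synonym 'a mpoly = "(nat \<Rightarrow>\<^sub>0 nat) \<Rightarrow>\<^sub>0 'a"

definition poly_ring :: "nat \<Rightarrow> ('a::zero) mpoly set" where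
  "poly_ring n = {p :: 'a mpoly. \<forall>t \<in> Poly_Mapping.keys p. \<forall>i \<in> Poly_Mapping.keys t. i < n}"

definition dvd_in :: "nat \<Rightarrow> ('a::comm_ring_1) mpoly \<Rightarrow> 'a mpoly \<Rightarrow> bool" where
  "dvd_in n d f \<longleftrightarrow> (\<exists>q \<in> poly_ring n. f = d * q)"

definition unit_in :: "nat \<Rightarrow> ('a::comm_ring_1) mpoly \<Rightarrow> bool" where
  "unit_in n u \<longleftrightarrow> dvd_in n u 1"

definition gcd_one_in :: "nat \<Rightarrow> ('a::comm_ring_1) mpoly set \<Rightarrow> bool" where
  "gcd_one_in n S \<longleftrightarrow> (\<forall>d \<in> poly_ring n. (\<forall>f \<in> S. dvd_in n d f) \<longrightarrow> unit_in n d)"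

definition ideal_gen :: "nat \<Rightarrow> nat \<Rightarrow> (nat \<Rightarrow> ('a::comm_ring_1) mpoly) \<Rightarrow> 'a mpoly set" where
  "ideal_gen n m f = {(\<Sum>i<m. g i * f i) | g. \<forall>i<m. g i \<in> poly_ring n}"

end

theory Submission
  imports Defs "HOL-Computational_Algebra.Polynomial" "HOL-Computational_Algebra.Factorial_Ring"
begin


lemma mp_sum_single:
  fixes p :: "('b \<Rightarrow>\<^sub>0 'c::comm_monoid_add)"
  shows "p = (\<Sum>t\<in>Poly_Mapping.keys p. Poly_Mapping.single t (Poly_Mapping.lookup p t))"
  by (rule poly_mapping_eqI) (simp add: lookup_sum lookup_single when_def in_keys_iff)

definition lin :: "((nat \<Rightarrow>\<^sub>0 nat) \<Rightarrow> 'a::field \<Rightarrow> 'b::comm_ring_1) \<Rightarrow> 'a mpoly \<Rightarrow> 'b" where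
  "lin F p = (\<Sum>t\<in>Poly_Mapping.keys p. F t (Poly_Mapping.lookup p t))"

locale addF =
  fixes F :: "(nat \<Rightarrow>\<^sub>0 nat) \<Rightarrow> 'a::field \<Rightarrow> 'b::comm_ring_1"
  assumes F_add: "F t (a + b) = F t a + F t b"
begin

lemma F_zero[simp]: "F t 0 = 0"
  using F_add[of t 0 0] by simp

lemma lin_superset:
  assumes "finite K" "Poly_Mapping.keys p \<subseteq> K"
  shows "lin F p = (\<Sum>t\<in>K. F t (Poly_Mapping.lookup p t))"
  unfolding lin_def
  by (rule sum.mono_neutral_left) (use assms in \<open>auto simp: in_keys_iff\<close>)

lemma lin_add: "lin F (p + q) = lin F p + lin F q"
proof -
  let ?K = "Poly_Mapping.keys p \<union> Poly_Mapping.keys q"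
  have "lin F (p + q) = (\<Sum>t\<in>?K. F t (Poly_Mapping.lookup (p+q) t))"
    by (rule lin_superset) (use keys_add[of p q] in auto)
  also have "\<dots> = (\<Sum>t\<in>?K. F t (Poly_Mapping.lookup p t)) + (\<Sum>t\<in>?K. F t (Poly_Mapping.lookup q t))"
    by (simp add: lookup_add F_add sum.distrib)
  also have "\<dots> = lin F p + lin F q"
    by (subst (1 2) lin_superset[symmetric]) auto
  finally show ?thesis .
qed

lemma lin_zero[simp]: "lin F 0 = 0"
  by (simp add: lin_def)

lemma lin_sum: "lin F (\<Sum>i\<in>I. g i) = (\<Sum>i\<in>I. lin F (g i))"
  by (induction I rule: infinite_finite_induct) (auto simp: lin_add)

lemma lin_single[simp]: "lin F (Poly_Mapping.single s c) = F s c"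
  by (simp add: lin_def)

lemma lin_uminus: "lin F (- p) = - lin F p"
proof -
  have "lin F p + lin F (-p) = 0" using lin_add[of p "-p"] by simp
  thus ?thesis by (simp add: eq_neg_iff_add_eq_0 add.commute)
qed

lemma lin_diff: "lin F (p - q) = lin F p - lin F q"
  using lin_add[of p "-q"] lin_uminus[of q] by simp

end

locale mulF = addF +
  assumes F_mult: "F (s + t) (a * b) = F s a * F t b"
    and F_one: "F 0 1 = 1"
begin

lemma lin_mult: "lin F (p * q) = lin F p * lin F q"
proof -
  let ?lp = "Poly_Mapping.lookup p" and ?lq = "Poly_Mapping.lookup q"
  have "p * q = (\<Sum>s\<in>Poly_Mapping.keys p. Poly_Mapping.single s (?lp s)) *
                (\<Sum>t\<in>Poly_Mapping.keys q. Poly_Mapping.single t (?lq t))"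
    by (subst (1) mp_sum_single[of p], subst (1) mp_sum_single[of q]) (rule refl)
  also have "\<dots> = (\<Sum>s\<in>Poly_Mapping.keys p. \<Sum>t\<in>Poly_Mapping.keys q.
                     Poly_Mapping.single (s + t) (?lp s * ?lq t))"
    by (simp add: sum_distrib_left sum_distrib_right mult_single, subst sum.swap, rule refl)
  finally have "lin F (p * q) = (\<Sum>s\<in>Poly_Mapping.keys p. \<Sum>t\<in>Poly_Mapping.keys q.
                     F s (?lp s) * F t (?lq t))"
    by (simp add: lin_sum F_mult)
  also have "\<dots> = lin F p * lin F q"
    by (simp add: lin_def sum_distrib_left sum_distrib_right, subst sum.swap, rule refl)
  finally show ?thesis .
qed

lemma lin_one: "lin F 1 = F 0 1"
proof -
  have "(1::'a mpoly) = Poly_Mapping.single 0 1" by simp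
  then show ?thesis by (metis lin_single)
qed

lemma lin_power: "lin F (p ^ k) = lin F p ^ k"
  by (induction k) (simp_all add: lin_one lin_mult F_one)

end




definition W :: "((nat \<Rightarrow>\<^sub>0 nat) \<Rightarrow> nat) \<Rightarrow> 'a::field mpoly \<Rightarrow> 'a mpoly poly" where
  "W w = lin (\<lambda>t c. monom (Poly_Mapping.single t c) (w t))"

definition wdeg :: "((nat \<Rightarrow>\<^sub>0 nat) \<Rightarrow> nat) \<Rightarrow> 'a::field mpoly \<Rightarrow> nat" where
  "wdeg w p = degree (W w p)"

lemma W_mulF:
  assumes "\<And>s t. w (s + t) = w s + w t"
  shows "mulF (\<lambda>t c. monom (Poly_Mapping.single t (c::'a::field)) (w t))"
proof -
  have w0: "w 0 = 0" using assms[of 0 0] by simp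
  show ?thesis
    by unfold_locales
      (simp_all add: single_add add_monom mult_monom mult_single assms w0 one_pCons monom_0)
qed

lemma coeff_W: "coeff (W w p) k =
   (\<Sum>t\<in>Poly_Mapping.keys p. if w t = k then Poly_Mapping.single t (Poly_Mapping.lookup p t) else 0)"
  by (simp add: W_def lin_def coeff_sum)

lemma lookup_coeff_W: "Poly_Mapping.lookup (coeff (W w p) (w t0)) t0 = Poly_Mapping.lookup p t0"
proof -
  have "Poly_Mapping.lookup (coeff (W w p) (w t0)) t0 =
     (\<Sum>t\<in>Poly_Mapping.keys p. if t = t0 then Poly_Mapping.lookup p t else 0)"
    unfolding coeff_W lookup_sum
    by (rule sum.cong) (auto simp: lookup_single when_def)
  also have "\<dots> = Poly_Mapping.lookup p t0"
    by (simp add: in_keys_iff)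
  finally show ?thesis .
qed

lemma W_eq_0_iff: "W w p = 0 \<longleftrightarrow> p = 0"
proof
  assume "W w p = 0"
  then have "Poly_Mapping.lookup p t = 0" for t
    using lookup_coeff_W[of w p t] by simp
  then show "p = 0" by (intro poly_mapping_eqI) simp
qed (simp add: W_def lin_def)

lemma wdeg_ge: "t \<in> Poly_Mapping.keys p \<Longrightarrow> w t \<le> wdeg w p"
  unfolding wdeg_def
  by (rule le_degree) (metis in_keys_iff lookup_coeff_W lookup_zero)

lemma wdeg_le:
  assumes H: "\<And>t. t \<in> Poly_Mapping.keys p \<Longrightarrow> w t \<le> k"
  shows "wdeg w p \<le> k"
  unfolding wdeg_def
proof (rule degree_le, intro allI impI)
  fix i assume "k < i"
  have "(if w t = i then Poly_Mapping.single t (Poly_Mapping.lookup p t) else 0) = 0"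
    if "t \<in> Poly_Mapping.keys p" for t
    using H[OF that] \<open>k < i\<close> by auto
  then show "coeff (W w p) i = 0"
    unfolding coeff_W by (intro sum.neutral) blast
qed

lemma wdeg_0_iff: "wdeg w p = 0 \<longleftrightarrow> (\<forall>t\<in>Poly_Mapping.keys p. w t = 0)"
  using wdeg_ge[of _ p w] wdeg_le[of p w 0] by fastforce

lemma wdeg_mult:
  assumes "\<And>s t. w (s + t) = w s + w t" "p \<noteq> 0" "q \<noteq> 0"
  shows "wdeg w (p * q) = wdeg w p + wdeg w q"
proof -
  interpret mulF "(\<lambda>t c. monom (Poly_Mapping.single t (c::'a::field)) (w t))"
    by (rule W_mulF) (rule assms(1))
  show ?thesis
    unfolding wdeg_def W_def lin_mult
    by (rule degree_mult_eq) (use assms(2,3) W_eq_0_iff[unfolded W_def] in auto)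
qed

definition tdeg :: "(nat \<Rightarrow>\<^sub>0 nat) \<Rightarrow> nat" where
  "tdeg t = (\<Sum>i\<in>Poly_Mapping.keys t. Poly_Mapping.lookup t i)"

lemma tdeg_superset: "finite K \<Longrightarrow> Poly_Mapping.keys t \<subseteq> K \<Longrightarrow> tdeg t = (\<Sum>i\<in>K. Poly_Mapping.lookup t i)"
  unfolding tdeg_def by (rule sum.mono_neutral_left) (auto simp: in_keys_iff)

lemma tdeg_add: "tdeg (s + t) = tdeg s + tdeg t"
proof -
  let ?K = "Poly_Mapping.keys s \<union> Poly_Mapping.keys t"
  have "tdeg (s + t) = (\<Sum>i\<in>?K. Poly_Mapping.lookup (s+t) i)"
    by (rule tdeg_superset) (use keys_add[of s t] in auto)
  also have "\<dots> = (\<Sum>i\<in>?K. Poly_Mapping.lookup s i) + (\<Sum>i\<in>?K. Poly_Mapping.lookup t i)"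
    by (simp add: lookup_add sum.distrib)
  also have "\<dots> = tdeg s + tdeg t"
    by (subst (1 2) tdeg_superset) auto
  finally show ?thesis .
qed

lemma tdeg_0_iff: "tdeg t = 0 \<longleftrightarrow> t = 0"
proof
  assume "tdeg t = 0"
  then have "\<forall>i\<in>Poly_Mapping.keys t. Poly_Mapping.lookup t i = 0"
    unfolding tdeg_def by simp
  then show "t = 0" by (intro poly_mapping_eqI) (auto simp: in_keys_iff)
qed (simp add: tdeg_def)

abbreviation tsz :: "'a::field mpoly \<Rightarrow> nat" where "tsz \<equiv> wdeg tdeg"

lemma mp_const: "Poly_Mapping.keys (p::'a::field mpoly) \<subseteq> {0} \<Longrightarrow> p = Poly_Mapping.single 0 (Poly_Mapping.lookup p 0)"
  by (intro poly_mapping_eqI) (auto simp: lookup_single when_def in_keys_iff)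

lemma tsz_0_iff: "tsz p = 0 \<longleftrightarrow> p = Poly_Mapping.single 0 (Poly_Mapping.lookup p 0)"
proof
  assume "tsz p = 0"
  then have "Poly_Mapping.keys p \<subseteq> {0}" by (auto simp: wdeg_0_iff tdeg_0_iff)
  then show "p = Poly_Mapping.single 0 (Poly_Mapping.lookup p 0)" by (rule mp_const)
next
  assume H: "p = Poly_Mapping.single 0 (Poly_Mapping.lookup p 0)"
  have "tsz (Poly_Mapping.single 0 (Poly_Mapping.lookup p 0)) = 0"
    by (auto simp: wdeg_0_iff tdeg_def)
  then show "tsz p = 0" by (subst H)
qed

lemma const_unit:
  fixes c :: "'a::field"
  assumes "c \<noteq> 0" shows "Poly_Mapping.single (0::nat\<Rightarrow>\<^sub>0nat) c dvd 1"
proof -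
  have "Poly_Mapping.single 0 c * Poly_Mapping.single 0 (inverse c) = (1 :: 'a mpoly)"
    using assms by (simp add: mult_single)
  then show ?thesis by (rule dvdI[OF sym])
qed

lemma unit_iff_const:
  fixes p :: "'a::field mpoly"
  shows "p dvd 1 \<longleftrightarrow> p \<noteq> 0 \<and> tsz p = 0"
proof
  assume u: "p dvd 1"
  then obtain q where pq0: "1 = p * q" by (rule dvdE)
  then have pq: "p * q = 1" by (rule sym)
  have "p \<noteq> 0" using pq by (metis mult_zero_left zero_neq_one)
  have "q \<noteq> 0" using pq by (metis mult_zero_right zero_neq_one)
  have "tsz (p * q) = tsz p + tsz q" using \<open>p \<noteq> 0\<close> \<open>q \<noteq> 0\<close> by (intro wdeg_mult tdeg_add)
  moreover have "tsz (1::'a mpoly) = 0" by (simp add: wdeg_0_iff tdeg_def)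
  ultimately have "tsz p = 0" unfolding pq by linarith
  then show "p \<noteq> 0 \<and> tsz p = 0" using \<open>p \<noteq> 0\<close> by blast
next
  assume "p \<noteq> 0 \<and> tsz p = 0"
  then have H: "p = Poly_Mapping.single 0 (Poly_Mapping.lookup p 0)" "p \<noteq> 0"
    using tsz_0_iff[of p] by blast+
  have "Poly_Mapping.lookup p 0 \<noteq> 0"
  proof
    assume Z: "Poly_Mapping.lookup p 0 = 0"
    have "Poly_Mapping.single (0::nat\<Rightarrow>\<^sub>0nat) (Poly_Mapping.lookup p 0) = 0" using Z by simp
    with H(1) have "p = 0" by (rule trans)
    with H(2) show False by contradiction
  qed
  then have "Poly_Mapping.single (0::nat\<Rightarrow>\<^sub>0nat) (Poly_Mapping.lookup p 0) dvd 1" by (rule const_unit)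
  then show "p dvd 1" by (subst H(1))
qed

lemma tsz_mult: "p \<noteq> 0 \<Longrightarrow> q \<noteq> 0 \<Longrightarrow> tsz (p * q) = tsz p + tsz q"
  by (intro wdeg_mult tdeg_add)

lemma tsz_less:
  fixes a b :: "'a::field mpoly"
  assumes "a * b \<noteq> 0" "\<not> a dvd 1"
  shows "tsz b < tsz (a * b)"
proof -
  have "a \<noteq> 0" "b \<noteq> 0" using assms by auto
  have "\<not> (a \<noteq> 0 \<and> tsz a = 0)" using assms(2) unit_iff_const[of a] by blast
  then have "tsz a > 0" using \<open>a \<noteq> 0\<close> by simp
  then show ?thesis using tsz_mult[OF \<open>a \<noteq> 0\<close> \<open>b \<noteq> 0\<close>] by simp
qed

lemma poly_ring_vars:
  fixes p q :: "'a::field mpoly"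
  assumes "p * q \<in> poly_ring n" "p * q \<noteq> 0"
  shows "p \<in> poly_ring n"
  unfolding poly_ring_def mem_Collect_eq
proof (intro ballI)
  fix t i assume t: "t \<in> Poly_Mapping.keys p" and i: "i \<in> Poly_Mapping.keys t"
  show "i < n"
  proof (rule ccontr)
    assume "\<not> i < n"
    let ?w = "\<lambda>t. Poly_Mapping.lookup t i"
    have wa: "\<And>s t. ?w (s + t) = ?w s + ?w t" by (simp add: lookup_add)
    have Z: "wdeg ?w (p * q) = 0"
      unfolding wdeg_0_iff
    proof
      fix s assume "s \<in> Poly_Mapping.keys (p * q)"
      then have "\<forall>i\<in>Poly_Mapping.keys s. i < n" using assms(1) unfolding poly_ring_def by blast
      then have "i \<notin> Poly_Mapping.keys s" using \<open>\<not> i < n\<close> by blast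
      then show "Poly_Mapping.lookup s i = 0" by (simp add: in_keys_iff)
    qed
    have "p \<noteq> 0" "q \<noteq> 0" using assms(2) by auto
    moreover note wdeg_mult[of ?w p q, OF wa this]
    ultimately have "wdeg ?w p = 0" using Z by simp
    then show False using t i by (auto simp: wdeg_0_iff in_keys_iff)
  qed
qed




lemma poly_ring_iff: "p \<in> poly_ring n \<longleftrightarrow> (\<forall>t\<in>Poly_Mapping.keys p. \<forall>i\<in>Poly_Mapping.keys t. i < n)"
  by (simp add: poly_ring_def)

lemma poly_ring_add: "p \<in> poly_ring n \<Longrightarrow> q \<in> poly_ring n \<Longrightarrow> p + q \<in> poly_ring n"
  using keys_add[of p q] unfolding poly_ring_iff by blast

lemma poly_ring_uminus: "(p::'a::field mpoly) \<in> poly_ring n \<Longrightarrow> - p \<in> poly_ring n"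
  unfolding poly_ring_iff by simp

lemma poly_ring_diff: "(p::'a::field mpoly) \<in> poly_ring n \<Longrightarrow> q \<in> poly_ring n \<Longrightarrow> p - q \<in> poly_ring n"
  using keys_diff[of p q] unfolding poly_ring_iff by blast

lemma poly_ring_zero: "0 \<in> poly_ring n"
  unfolding poly_ring_iff by simp

lemma poly_ring_single_const: "Poly_Mapping.single 0 c \<in> poly_ring n"
  unfolding poly_ring_iff by simp

lemma poly_ring_one: "(1::'a::field mpoly) \<in> poly_ring n"
  unfolding poly_ring_iff by simp

lemma poly_ring_mult: "(p::'a::field mpoly) \<in> poly_ring n \<Longrightarrow> q \<in> poly_ring n \<Longrightarrow> p * q \<in> poly_ring n"
  unfolding poly_ring_iff
proof (intro ballI)
  fix t i assume p: "\<forall>t\<in>Poly_Mapping.keys p. \<forall>i\<in>Poly_Mapping.keys t. i < n"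
    and q: "\<forall>t\<in>Poly_Mapping.keys q. \<forall>i\<in>Poly_Mapping.keys t. i < n"
    and t: "t \<in> Poly_Mapping.keys (p * q)" and i: "i \<in> Poly_Mapping.keys t"
  from t keys_mult[of p q] obtain a b where ab: "t = a + b" "a \<in> Poly_Mapping.keys p" "b \<in> Poly_Mapping.keys q"
    by blast
  with i keys_add[of a b] have "i \<in> Poly_Mapping.keys a \<or> i \<in> Poly_Mapping.keys b" by blast
  then show "i < n" using p q ab by blast
qed

lemma poly_ring_sum: "(\<And>i. i \<in> I \<Longrightarrow> g i \<in> poly_ring n) \<Longrightarrow> (\<Sum>i\<in>I. g i) \<in> poly_ring n"
  by (induction I rule: infinite_finite_induct) (auto intro: poly_ring_add poly_ring_zero)

lemma poly_ring_prod: "(\<And>i. i \<in> I \<Longrightarrow> (g i :: 'a::field mpoly) \<in> poly_ring n) \<Longrightarrow> (\<Prod>i\<in>I. g i) \<in> poly_ring n"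
  by (induction I rule: infinite_finite_induct) (auto intro: poly_ring_mult poly_ring_one)

lemma poly_ring_mono: "p \<in> poly_ring n \<Longrightarrow> n \<le> m \<Longrightarrow> p \<in> poly_ring m"
  unfolding poly_ring_iff by force

lemma poly_ring_exists: "\<exists>n. p \<in> poly_ring n"
proof -
  let ?n = "Suc (Max (\<Union>t\<in>Poly_Mapping.keys p. Poly_Mapping.keys t))"
  have "finite (\<Union>t\<in>Poly_Mapping.keys p. Poly_Mapping.keys t)" by simp
  then have "p \<in> poly_ring ?n" unfolding poly_ring_iff
    by (auto simp: less_Suc_eq_le intro!: Max_ge)
  then show ?thesis ..
qed

section \<open>Shift isomorphism\<close>

lift_definition dn :: "(nat \<Rightarrow>\<^sub>0 nat) \<Rightarrow> (nat \<Rightarrow>\<^sub>0 nat)" is "\<lambda>f i. f (Suc i)"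
proof -
  fix f :: "nat \<Rightarrow> nat" assume "finite {x. f x \<noteq> 0}"
  then have "finite (Suc -` {x. f x \<noteq> 0})" by (rule finite_vimageI) simp
  then show "finite {x. f (Suc x) \<noteq> 0}" by (simp add: vimage_def)
qed

lift_definition upk :: "(nat \<Rightarrow>\<^sub>0 nat) \<Rightarrow> (nat \<Rightarrow>\<^sub>0 nat)" is "\<lambda>f i. if i = 0 then 0 else f (i - 1)"
proof -
  fix f :: "nat \<Rightarrow> nat" assume "finite {x. f x \<noteq> 0}"
  then have "finite (Suc ` {x. f x \<noteq> 0})" by simp
  moreover have "{x. (if x = 0 then 0 else f (x - 1)) \<noteq> 0} \<subseteq> Suc ` {x. f x \<noteq> 0}"
  proof
    fix x assume "x \<in> {x. (if x = 0 then 0 else f (x - 1)) \<noteq> 0}"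
    then have "x \<noteq> 0" "f (x - 1) \<noteq> 0" by (auto split: if_splits)
    then have "x = Suc (x - 1)" "x - 1 \<in> {x. f x \<noteq> 0}" by auto
    then show "x \<in> Suc ` {x. f x \<noteq> 0}" by (rule image_eqI)
  qed
  ultimately show "finite {x. (if x = 0 then 0 else f (x - 1)) \<noteq> 0}" by (rule finite_subset[rotated])
qed

lemma lookup_dn[simp]: "Poly_Mapping.lookup (dn t) i = Poly_Mapping.lookup t (Suc i)"
  by transfer simp

lemma lookup_upk: "Poly_Mapping.lookup (upk t) i = (if i = 0 then 0 else Poly_Mapping.lookup t (i - 1))"
  by transfer simp

lemma dn_add: "dn (s + t) = dn s + dn t"
  by (rule poly_mapping_eqI) (simp add: lookup_add)

lemma dn_zero[simp]: "dn 0 = 0"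
  by (rule poly_mapping_eqI) simp

lemma mono_eq_iff: "s = t \<longleftrightarrow> Poly_Mapping.lookup s 0 = Poly_Mapping.lookup t 0 \<and> dn s = dn t"
proof
  assume "Poly_Mapping.lookup s 0 = Poly_Mapping.lookup t 0 \<and> dn s = dn t"
  then have H: "Poly_Mapping.lookup s 0 = Poly_Mapping.lookup t 0" "dn s = dn t" by auto
  have "Poly_Mapping.lookup s i = Poly_Mapping.lookup t i" for i
  proof (cases i)
    case (Suc j)
    have "Poly_Mapping.lookup (dn s) j = Poly_Mapping.lookup (dn t) j" using H(2) by simp
    then show ?thesis using Suc by simp
  qed (use H in simp)
  then show "s = t" by (rule poly_mapping_eqI)
qed simp

lemma dn_upk: "dn (upk s + Poly_Mapping.single 0 i) = s"
  by (rule poly_mapping_eqI) (simp add: lookup_add lookup_upk lookup_single)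

lemma lookup0_upk: "Poly_Mapping.lookup (upk s + Poly_Mapping.single 0 i) 0 = i"
  by (simp add: lookup_add lookup_upk)

definition SF :: "(nat \<Rightarrow>\<^sub>0 nat) \<Rightarrow> 'a::field \<Rightarrow> 'a mpoly poly" where
  "SF t c = monom (Poly_Mapping.single (dn t) c) (Poly_Mapping.lookup t 0)"

definition sig :: "'a::field mpoly \<Rightarrow> 'a mpoly poly" where
  "sig = lin SF"

interpretation S: mulF SF
  by unfold_locales
    (simp_all add: SF_def single_add add_monom mult_monom mult_single dn_add lookup_add one_pCons monom_0)

lemma sig_add: "sig (p + q) = sig p + sig q" by (simp add: sig_def S.lin_add)
lemma sig_mult: "sig (p * q) = sig p * sig q" by (simp add: sig_def S.lin_mult)
lemma sig_one: "sig 1 = 1" by (simp add: sig_def S.lin_one S.F_one)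
lemma sig_zero: "sig 0 = 0" by (simp add: sig_def)
lemma sig_diff: "sig (p - q) = sig p - sig q" by (simp add: sig_def S.lin_diff)

lemma coeff_sig: "coeff (sig p) k =
   (\<Sum>t\<in>Poly_Mapping.keys p. if Poly_Mapping.lookup t 0 = k then
        Poly_Mapping.single (dn t) (Poly_Mapping.lookup p t) else 0)"
  by (simp add: sig_def lin_def SF_def coeff_sum)

lemma lookup_coeff_sig: "Poly_Mapping.lookup (coeff (sig p) (Poly_Mapping.lookup t0 0)) (dn t0) =
     Poly_Mapping.lookup p t0"
proof -
  have "Poly_Mapping.lookup (coeff (sig p) (Poly_Mapping.lookup t0 0)) (dn t0) =
     (\<Sum>t\<in>Poly_Mapping.keys p. if t = t0 then Poly_Mapping.lookup p t else 0)"
    unfolding coeff_sig lookup_sum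
    by (rule sum.cong) (auto simp: lookup_single when_def mono_eq_iff[of _ t0])
  also have "\<dots> = Poly_Mapping.lookup p t0"
    by (simp add: in_keys_iff)
  finally show ?thesis .
qed

lemma sig_eq_0_iff: "sig p = 0 \<longleftrightarrow> p = 0"
proof
  assume "sig p = 0"
  then have "Poly_Mapping.lookup p t = 0" for t
    using lookup_coeff_sig[of p t] by simp
  then show "p = 0" by (intro poly_mapping_eqI) simp
qed (simp add: sig_zero)

lemma sig_inj: "sig p = sig q \<Longrightarrow> p = q"
  using sig_eq_0_iff[of "p - q"] by (simp add: sig_diff)

lemma sig_single: "sig (Poly_Mapping.single (upk s + Poly_Mapping.single 0 i) c) = monom (Poly_Mapping.single s c) i"
  by (simp add: sig_def SF_def dn_upk lookup0_upk)

definition sinv :: "'a::field mpoly poly \<Rightarrow> 'a mpoly" where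
  "sinv P = (\<Sum>i\<le>degree P. \<Sum>s\<in>Poly_Mapping.keys (coeff P i).
      Poly_Mapping.single (upk s + Poly_Mapping.single 0 i) (Poly_Mapping.lookup (coeff P i) s))"

lemma sig_sinv[simp]: "sig (sinv P) = P"
proof -
  define g where "g i s = Poly_Mapping.single (upk s + Poly_Mapping.single 0 i) (Poly_Mapping.lookup (coeff P i) s)" for i s
  have "P = (\<Sum>i\<le>degree P. monom (coeff P i) i)" by (simp add: poly_as_sum_of_monoms)
  also have "\<dots> = (\<Sum>i\<le>degree P. \<Sum>s\<in>Poly_Mapping.keys (coeff P i).
        monom (Poly_Mapping.single s (Poly_Mapping.lookup (coeff P i) s)) i)"
    by (subst (1) mp_sum_single[of "coeff P _"]) (simp add: monom_sum)
  also have "\<dots> = (\<Sum>i\<le>degree P. \<Sum>s\<in>Poly_Mapping.keys (coeff P i). sig (g i s))"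
    by (simp add: g_def sig_single)
  also have "\<dots> = sig (\<Sum>i\<le>degree P. \<Sum>s\<in>Poly_Mapping.keys (coeff P i). g i s)"
    unfolding sig_def by (simp add: S.lin_sum)
  also have "\<dots> = sig (sinv P)" by (simp add: sinv_def g_def)
  finally show ?thesis by (rule sym)
qed

lemma sinv_poly_ring:
  assumes "\<And>i. coeff P i \<in> poly_ring N"
  shows "sinv P \<in> poly_ring (Suc N)"
  unfolding sinv_def
proof (intro poly_ring_sum)
  fix i s assume s: "s \<in> Poly_Mapping.keys (coeff P i)"
  have "j < Suc N" if j: "j \<in> Poly_Mapping.keys (upk s + Poly_Mapping.single 0 i)" for j
  proof (cases j)
    case (Suc j')
    with j keys_add[of "upk s" "Poly_Mapping.single 0 i"] have "j \<in> Poly_Mapping.keys (upk s)"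
      by (auto split: if_splits)
    then have "j' \<in> Poly_Mapping.keys s" using Suc by (simp add: in_keys_iff lookup_upk)
    then show ?thesis using assms[of i] s Suc unfolding poly_ring_iff by auto
  qed simp
  then show "Poly_Mapping.single (upk s + Poly_Mapping.single 0 i) (Poly_Mapping.lookup (coeff P i) s) \<in> poly_ring (Suc N)"
    unfolding poly_ring_iff by simp
qed

lemma sinv_sig[simp]: "sinv (sig p) = p"
  by (rule sig_inj) simp

lemma sinv_mult: "sinv (A * B) = sinv A * sinv B"
  by (rule sig_inj) (simp add: sig_mult)

lemma sinv_one: "sinv 1 = 1"
  by (rule sig_inj) (simp add: sig_one)

lemma sinv_zero: "sinv 0 = 0"
  by (rule sig_inj) (simp add: sig_zero)

lemma sig_dvd_iff: "sig a dvd sig b \<longleftrightarrow> a dvd b"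
proof
  assume "sig a dvd sig b"
  then obtain C where "sig b = sig a * C" by (rule dvdE)
  then have "sig b = sig (a * sinv C)" by (simp add: sig_mult)
  then have "b = a * sinv C" by (rule sig_inj)
  then show "a dvd b" by (rule dvdI)
next
  assume "a dvd b"
  then obtain c where "b = a * c" by (rule dvdE)
  then show "sig a dvd sig b" by (simp add: sig_mult)
qed

lemma sig_unit_iff: "sig a dvd 1 \<longleftrightarrow> a dvd 1"
  using sig_dvd_iff[of a 1] by (simp add: sig_one)

lemma sig_irreducible_iff: "irreducible (sig p) \<longleftrightarrow> irreducible p"
proof
  assume H: "irreducible (sig p)"
  show "irreducible p"
  proof (rule irreducibleI)
    show "p \<noteq> 0" using H by (auto simp: sig_zero)
    show "\<not> p dvd 1" using H by (auto simp: sig_unit_iff dest: irreducible_not_unit)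
    fix a b assume "p = a * b"
    then have "sig p = sig a * sig b" by (simp add: sig_mult)
    then show "a dvd 1 \<or> b dvd 1" using H by (auto dest: irreducibleD simp: sig_unit_iff)
  qed
next
  assume H: "irreducible p"
  show "irreducible (sig p)"
  proof (rule irreducibleI)
    show "sig p \<noteq> 0" using H by (auto simp: sig_eq_0_iff)
    show "\<not> sig p dvd 1" using H by (auto simp: sig_unit_iff dest: irreducible_not_unit)
    fix A B assume "sig p = A * B"
    then have "sig p = sig (sinv A * sinv B)" by (simp add: sig_mult)
    then have "p = sinv A * sinv B" by (rule sig_inj)
    then have "sinv A dvd 1 \<or> sinv B dvd 1" using H by (auto dest: irreducibleD)
    then show "A dvd 1 \<or> B dvd 1" using sig_unit_iff[of "sinv A"] sig_unit_iff[of "sinv B"] by simp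
  qed
qed

lemma sig_prime_iff: "prime_elem (sig p) \<longleftrightarrow> prime_elem p"
proof
  assume H: "prime_elem (sig p)"
  show "prime_elem p"
  proof (rule prime_elemI)
    show "p \<noteq> 0" using H by (auto simp: sig_zero)
    show "\<not> p dvd 1" using H by (auto simp: sig_unit_iff dest: prime_elem_not_unit)
    fix a b assume "p dvd a * b"
    then have "sig p dvd sig a * sig b" by (simp add: sig_mult[symmetric] sig_dvd_iff)
    then show "p dvd a \<or> p dvd b" using H by (auto dest: prime_elem_dvd_multD simp: sig_dvd_iff)
  qed
next
  assume H: "prime_elem p"
  show "prime_elem (sig p)"
  proof (rule prime_elemI)
    show "sig p \<noteq> 0" using H by (auto simp: sig_eq_0_iff)
    show "\<not> sig p dvd 1" using H by (auto simp: sig_unit_iff dest: prime_elem_not_unit)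
    fix A B assume "sig p dvd A * B"
    then have "sig p dvd sig (sinv A * sinv B)" by (simp add: sig_mult)
    then have "p dvd sinv A * sinv B" by (simp add: sig_dvd_iff)
    then have "p dvd sinv A \<or> p dvd sinv B" using H by (auto dest: prime_elem_dvd_multD)
    then show "sig p dvd A \<or> sig p dvd B" using sig_dvd_iff[of p "sinv A"] sig_dvd_iff[of p "sinv B"] by simp
  qed
qed

lemma coeff_sig_poly_ring:
  assumes "p \<in> poly_ring (Suc N)"
  shows "coeff (sig p) k \<in> poly_ring N"
  unfolding coeff_sig
proof (rule poly_ring_sum)
  fix t assume t: "t \<in> Poly_Mapping.keys p"
  have "Poly_Mapping.single (dn t) c \<in> poly_ring N" for c :: 'a
  proof -
    have "i < N" if "i \<in> Poly_Mapping.keys (dn t)" for i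
    proof -
      have "Suc i \<in> Poly_Mapping.keys t" using that by (simp add: in_keys_iff)
      then show ?thesis using assms t unfolding poly_ring_iff by fastforce
    qed
    then show ?thesis unfolding poly_ring_iff by simp
  qed
  then show "(if Poly_Mapping.lookup t 0 = k then Poly_Mapping.single (dn t) (Poly_Mapping.lookup p t) else 0) \<in> poly_ring N"
    by (simp add: poly_ring_zero)
qed




lemma exists_irreducible_dvd:
  fixes f :: "'b::{comm_semiring_1,semiring_no_zero_divisors} \<Rightarrow> nat" and x :: 'b
  assumes f: "\<And>a b. a * b \<noteq> 0 \<Longrightarrow> \<not> a dvd 1 \<Longrightarrow> f b < f (a * b)"
  shows "x \<noteq> 0 \<Longrightarrow> \<not> x dvd 1 \<Longrightarrow> \<exists>q. irreducible q \<and> q dvd x"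
proof (induction x rule: measure_induct_rule[where f=f])
  case (less x)
  show ?case
  proof (cases "irreducible x")
    case True then show ?thesis by (blast intro: dvd_refl)
  next
    case False
    then obtain a b where ab: "x = a * b" "\<not> a dvd 1" "\<not> b dvd 1"
      using less.prems unfolding irreducible_def by blast
    have "a \<noteq> 0" using ab less.prems by auto
    have "f a < f x" using f[of b a] ab less.prems by (simp add: mult.commute)
    then obtain q where "irreducible q" "q dvd a" using less.IH[of a] \<open>a \<noteq> 0\<close> ab by blast
    then show ?thesis using ab(1) by (auto intro: dvd_mult2)
  qed
qed

lemma tsz_less': "(a::'a::field mpoly) * b \<noteq> 0 \<Longrightarrow> \<not> a dvd 1 \<Longrightarrow> tsz b < tsz (a * b)"
  by (rule tsz_less)

lemma exists_irreducible_dvd_mp: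
  fixes x :: "'a::field mpoly"
  shows "x \<noteq> 0 \<Longrightarrow> \<not> x dvd 1 \<Longrightarrow> \<exists>q. irreducible q \<and> q dvd x"
  by (rule exists_irreducible_dvd[of tsz]) (rule tsz_less')

abbreviation sz :: "'a::field mpoly poly \<Rightarrow> nat" where "sz P \<equiv> tsz (sinv P)"

lemma sinv_mult': "sinv (A * B) = sinv A * sinv B" by (rule sinv_mult)

lemma sz_less:
  fixes A B :: "'a::field mpoly poly"
  assumes "A * B \<noteq> 0" "\<not> A dvd 1"
  shows "sz B < sz (A * B)"
proof -
  have "sinv A * sinv B \<noteq> 0" using assms(1) sig_sinv[of "A * B"] by (metis sinv_mult sig_zero)
  moreover have "\<not> sinv A dvd 1" using assms(2) sig_unit_iff[of "sinv A"] by simp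
  ultimately show ?thesis unfolding sinv_mult by (rule tsz_less)
qed

lemma exists_irreducible_dvd_deg:
  fixes g :: "'a::field mpoly poly"
  shows "degree g > 0 \<Longrightarrow> \<exists>h. irreducible h \<and> degree h > 0 \<and> h dvd g"
proof (induction g rule: measure_induct_rule[where f=sz])
  case (less g)
  show ?case
  proof (cases "irreducible g")
    case True then show ?thesis using less.prems by (blast intro: dvd_refl)
  next
    case False
    have "g \<noteq> 0" using less.prems by auto
    have "\<not> g dvd 1" using less.prems by (auto simp: is_unit_poly_iff)
    then obtain a b where ab: "g = a * b" "\<not> a dvd 1" "\<not> b dvd 1"
      using False \<open>g \<noteq> 0\<close> unfolding irreducible_def by blast
    have "a \<noteq> 0" "b \<noteq> 0" using ab \<open>g \<noteq> 0\<close> by auto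
    then have dg: "degree g = degree a + degree b" using ab(1) by (simp add: degree_mult_eq)
    show ?thesis
    proof (cases "degree a > 0")
      case True
      have "sz a < sz g" using sz_less[of b a] ab \<open>g \<noteq> 0\<close> by (simp add: mult.commute)
      then obtain h where "irreducible h" "degree h > 0" "h dvd a" using less.IH[of a] True by blast
      then show ?thesis using ab(1) by (auto intro: dvd_mult2)
    next
      case False
      then have "degree b > 0" using dg less.prems by simp
      have "sz b < sz g" using sz_less[of a b] ab \<open>g \<noteq> 0\<close> by simp
      then obtain h where "irreducible h" "degree h > 0" "h dvd b" using less.IH[of b] \<open>degree b > 0\<close> by blast
      then show ?thesis using ab(1) by (auto intro: dvd_mult)
    qed
  qed
qed

lemma noconst:
  fixes H :: "'b::{comm_semiring_1,semiring_no_zero_divisors} poly"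
  assumes "irreducible H" "degree H > 0" "\<not> q dvd 1"
  shows "\<not> [:q:] dvd H"
proof
  assume "[:q:] dvd H"
  then obtain W where W: "H = [:q:] * W" by (rule dvdE)
  have "[:q:] dvd 1 \<or> W dvd 1" using assms(1) W by (rule irreducibleD)
  then show False
  proof
    assume "[:q:] dvd 1" then show False using assms(3) by (simp add: is_unit_const_poly_iff)
  next
    assume "W dvd 1"
    then obtain w where "W = [:w:]" by (auto simp: is_unit_poly_iff)
    then have "degree H = 0" using W by simp
    then show False using assms(2) by simp
  qed
qed

section \<open>Coefficient-restricted polynomials\<close>

definition Rx :: "nat \<Rightarrow> 'a::field mpoly poly \<Rightarrow> bool" where
  "Rx N P \<longleftrightarrow> (\<forall>i. coeff P i \<in> poly_ring N)"

lemma Rx_add: "Rx N A \<Longrightarrow> Rx N B \<Longrightarrow> Rx N (A + B)"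
  by (simp add: Rx_def poly_ring_add)

lemma Rx_diff: "Rx N A \<Longrightarrow> Rx N B \<Longrightarrow> Rx N (A - B)"
  by (simp add: Rx_def poly_ring_diff)

lemma Rx_uminus: "Rx N A \<Longrightarrow> Rx N (- A)"
  by (simp add: Rx_def poly_ring_uminus)

lemma Rx_zero: "Rx N 0"
  by (simp add: Rx_def poly_ring_zero)

lemma Rx_const: "c \<in> poly_ring N \<Longrightarrow> Rx N [:c:]"
  by (simp add: Rx_def coeff_pCons poly_ring_zero split: nat.splits)

lemma Rx_one: "Rx N 1"
  by (simp add: one_pCons Rx_const poly_ring_one)

lemma Rx_mult: "Rx N A \<Longrightarrow> Rx N B \<Longrightarrow> Rx N (A * B)"
  unfolding Rx_def coeff_mult by (intro allI poly_ring_sum poly_ring_mult) auto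

lemma Rx_smult: "c \<in> poly_ring N \<Longrightarrow> Rx N A \<Longrightarrow> Rx N (smult c A)"
  by (simp add: Rx_def poly_ring_mult)

lemma Rx_monom: "c \<in> poly_ring N \<Longrightarrow> Rx N (monom c d)"
  by (simp add: Rx_def poly_ring_zero)

lemma Rx_sig: "p \<in> poly_ring (Suc N) \<Longrightarrow> Rx N (sig p)"
  by (simp add: Rx_def coeff_sig_poly_ring)

lemma Rx_iff: "Rx N P \<longleftrightarrow> sinv P \<in> poly_ring (Suc N)"
proof
  assume "Rx N P" then show "sinv P \<in> poly_ring (Suc N)"
    unfolding Rx_def by (intro sinv_poly_ring) auto
next
  assume "sinv P \<in> poly_ring (Suc N)"
  then have "Rx N (sig (sinv P))" by (rule Rx_sig)
  then show "Rx N P" by simp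
qed

lemma Rx_dvd:
  assumes "Rx N X" "X \<noteq> 0" "X = Y * Z"
  shows "Rx N Y"
proof -
  have "sinv X = sinv Y * sinv Z" using assms(3) by (simp add: sinv_mult)
  moreover have "sinv X \<noteq> 0" using assms(2) sig_sinv[of X] by (metis sig_zero)
  moreover have "sinv X \<in> poly_ring (Suc N)" using assms(1) Rx_iff by blast
  ultimately have "sinv Y \<in> poly_ring (Suc N)" using poly_ring_vars by metis
  then show ?thesis using Rx_iff by blast
qed

lemma poly_ring_power: "(c::'a::field mpoly) \<in> poly_ring N \<Longrightarrow> c ^ k \<in> poly_ring N"
  by (induction k) (auto intro: poly_ring_mult poly_ring_one)

lemma lead_coeff_Rx: "Rx N A \<Longrightarrow> lead_coeff A \<in> poly_ring N"
  by (simp add: Rx_def)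




definition relprime :: "nat \<Rightarrow> 'a::field mpoly \<Rightarrow> bool" where
  "relprime N c \<longleftrightarrow> (\<forall>a\<in>poly_ring N. \<forall>b\<in>poly_ring N. c dvd a * b \<longrightarrow> c dvd a \<or> c dvd b)"

lemma const_prime_rel:
  fixes c :: "'a::field mpoly"
  assumes rp: "relprime N c" and RA: "Rx N a" and RB: "Rx N b" and dv0: "[:c:] dvd a * b"
  shows "[:c:] dvd a \<or> [:c:] dvd b"
proof -
  from dv0 have dvd: "c dvd coeff (a * b) n" for n
    by (subst (asm) const_poly_dvd_iff) blast
  {
    define m where "m = (GREATEST m. \<not>c dvd coeff b m)"
    assume "\<not>[:c:] dvd b"
    hence A: "\<exists>i. \<not>c dvd coeff b i" by (subst (asm) const_poly_dvd_iff) blast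
    have B: "\<And>i. \<not>c dvd coeff b i \<Longrightarrow> i \<le> degree b"
      by (auto intro: le_degree)
    have coeff_m: "\<not>c dvd coeff b m" unfolding m_def by (rule GreatestI_ex_nat[OF A B])
    have "i \<le> m" if "\<not>c dvd coeff b i" for i
      unfolding m_def by (metis (mono_tags, lifting) B Greatest_le_nat that)
    hence dvd_b: "c dvd coeff b i" if "i > m" for i using that by force

    have "c dvd coeff a i" for i
    proof (induction i rule: nat_descend_induct[of "degree a"])
      case (base i)
      thus ?case by (simp add: coeff_eq_0)
    next
      case (descend i)
      let ?A = "{..i+m} - {i}"
      have "c dvd coeff (a * b) (i + m)" by (rule dvd)
      also have "coeff (a * b) (i + m) = (\<Sum>k\<le>i + m. coeff a k * coeff b (i + m - k))"
        by (simp add: coeff_mult)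
      also have "{..i+m} = insert i ?A" by auto
      also have "(\<Sum>k\<in>\<dots>. coeff a k * coeff b (i + m - k)) =
                   coeff a i * coeff b m + (\<Sum>k\<in>?A. coeff a k * coeff b (i + m - k))"
        (is "_ = _ + ?S")
        by (subst sum.insert) simp_all
      finally have eq: "c dvd coeff a i * coeff b m + ?S" .
      moreover have "c dvd ?S"
      proof (rule dvd_sum)
        fix k assume k: "k \<in> {..i+m} - {i}"
        show "c dvd coeff a k * coeff b (i + m - k)"
        proof (cases "k < i")
          case False
          with k have "c dvd coeff a k" by (intro descend.IH) simp
          thus ?thesis by simp
        next
          case True
          hence "c dvd coeff b (i + m - k)" by (intro dvd_b) simp
          thus ?thesis by simp
        qed
      qed
      ultimately have "c dvd coeff a i * coeff b m"
        by (simp add: dvd_add_left_iff)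
      moreover have "coeff a i \<in> poly_ring N" "coeff b m \<in> poly_ring N"
        using RA RB by (auto simp: Rx_def)
      ultimately have "c dvd coeff a i \<or> c dvd coeff b m" using rp unfolding relprime_def by blast
      with coeff_m show "c dvd coeff a i" by blast
    qed
    hence "[:c:] dvd a" by (subst const_poly_dvd_iff) blast
  }
  then show "[:c:] dvd a \<or> [:c:] dvd b" by blast
qed

lemma pdiv_Rx:
  fixes g :: "'a::field mpoly poly"
  assumes RG: "Rx N g" and g0: "g \<noteq> 0"
  shows "Rx N A \<Longrightarrow> \<exists>k Q r. Rx N Q \<and> Rx N r \<and> smult (lead_coeff g ^ k) A = Q * g + r \<and> (r = 0 \<or> degree r < degree g)"
proof (induction A rule: measure_induct_rule[where f=degree])
  case (less A)
  show ?case
  proof (cases "A = 0 \<or> degree A < degree g")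
    case True
    then show ?thesis
      by (intro exI[of _ 0] exI[of _ 0] exI[of _ A]) (auto simp: Rx_zero less.prems)
  next
    case False
    then have "A \<noteq> 0" "degree g \<le> degree A" by auto
    define d where "d = degree A - degree g"
    define A' where "A' = smult (lead_coeff g) A - monom (lead_coeff A) d * g"
    have RA': "Rx N A'" unfolding A'_def
      by (intro Rx_diff Rx_smult Rx_mult Rx_monom lead_coeff_Rx less.prems RG)
    have cA': "coeff A' (degree A) = 0"
      using \<open>degree g \<le> degree A\<close> by (simp add: A'_def coeff_monom_mult d_def)
    have dA': "degree A' \<le> degree A"
    proof -
      have "degree (smult (lead_coeff g) A) \<le> degree A" by (rule degree_smult_le)
      moreover have "degree (monom (lead_coeff A) d * g) \<le> degree A"
        using degree_mult_le[of "monom (lead_coeff A) d" g] degree_monom_le[of "lead_coeff A" d]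
          \<open>degree g \<le> degree A\<close> unfolding d_def by linarith
      ultimately show ?thesis unfolding A'_def by (rule degree_diff_le)
    qed
    show ?thesis
    proof (cases "A' = 0")
      case True
      then have "smult (lead_coeff g ^ 1) A = monom (lead_coeff A) d * g + 0" by (simp add: A'_def)
      then show ?thesis
        by (intro exI[of _ 1] exI[of _ "monom (lead_coeff A) d"] exI[of _ 0])
          (simp add: Rx_zero Rx_monom lead_coeff_Rx less.prems)
    next
      case False
      then have "degree A' \<noteq> degree A" using cA' by (metis leading_coeff_0_iff)
      then have "degree A' < degree A" using dA' by simp
      then obtain k Q r where Q: "Rx N Q" "Rx N r" "smult (lead_coeff g ^ k) A' = Q * g + r"
          "r = 0 \<or> degree r < degree g"
        using less.IH[of A'] RA' by blast
      have "smult (lead_coeff g ^ Suc k) A = smult (lead_coeff g ^ k) A' +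
              smult (lead_coeff g ^ k) (monom (lead_coeff A) d) * g"
        by (simp add: A'_def smult_diff_right smult_smult algebra_simps)
      also have "\<dots> = (Q + smult (lead_coeff g ^ k) (monom (lead_coeff A) d)) * g + r"
        using Q(3) by (simp add: algebra_simps)
      finally show ?thesis using Q
        by (intro exI[of _ "Suc k"] exI[of _ "Q + smult (lead_coeff g ^ k) (monom (lead_coeff A) d)"] exI[of _ r])
          (auto intro!: Rx_add Rx_smult Rx_monom poly_ring_power lead_coeff_Rx RG less.prems)
    qed
  qed
qed




lemma G_rel:
  fixes H :: "'a::field mpoly poly"
  assumes IH: "\<forall>q::'a mpoly\<in>poly_ring N. irreducible q \<longrightarrow> relprime N q"
    and RH: "Rx N H" and nc: "\<forall>q\<in>poly_ring N. irreducible q \<longrightarrow> \<not> [:q:] dvd H"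
  shows "c \<in> poly_ring N \<Longrightarrow> c \<noteq> 0 \<Longrightarrow> Rx N A \<Longrightarrow> H dvd [:c:] * A \<Longrightarrow> H dvd A"
proof (induction c rule: measure_induct_rule[where f=tsz])
  case (less c)
  show ?case
  proof (cases "c dvd 1")
    case True
    then obtain u where u: "1 = c * u" by (rule dvdE)
    have cu: "c * u = 1" "u * c = 1" using u by (simp_all add: mult.commute)
    have "A = [:u:] * ([:c:] * A)" by (simp add: cu)
    moreover have "H dvd [:u:] * ([:c:] * A)" using less.prems(4) by (rule dvd_mult)
    ultimately show ?thesis by simp
  next
    case False
    obtain q where q: "irreducible q" "q dvd c"
      using exists_irreducible_dvd_mp[of c] less.prems False by blast
    from q(2) obtain c' where c': "c = q * c'" by (rule dvdE)
    have qR: "q \<in> poly_ring N" using poly_ring_vars[of q c' N] c' less.prems by simp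
    have c'R: "c' \<in> poly_ring N" using poly_ring_vars[of c' q N] c' less.prems by (simp add: mult.commute)
    have "c' \<noteq> 0" using c' less.prems by auto
    have "q \<noteq> 0" using q by auto
    have rp: "relprime N q" using IH qR q(1) by blast
    from less.prems(4) obtain W where W: "[:c:] * A = H * W" by (rule dvdE)
    show ?thesis
    proof (cases "A = 0")
      case True then show ?thesis by simp
    next
      case False
      have X0: "[:c:] * A \<noteq> 0" using False less.prems by simp
      have "Rx N ([:c:] * A)" by (intro Rx_mult Rx_const less.prems)
      then have RW: "Rx N W" using X0 W by (intro Rx_dvd[of N "[:c:] * A" W H]) (auto simp: mult.commute)
      have cq: "[:c:] = [:q:] * [:c':]" using c' by simp
      have E: "H * W = [:q:] * ([:c':] * A)" by (simp only: W[symmetric] cq mult.assoc)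
      have "[:q:] dvd H * W" unfolding E by (rule dvd_triv_left)
      then have "[:q:] dvd H \<or> [:q:] dvd W" by (rule const_prime_rel[OF rp RH RW])
      moreover have "\<not> [:q:] dvd H" using nc q qR by blast
      ultimately have "[:q:] dvd W" by blast
      then obtain W' where W': "W = [:q:] * W'" by (rule dvdE)
      have "[:q:] * ([:c':] * A) = [:q:] * (H * W')"
        using W unfolding cq W' by (simp add: ac_simps)
      moreover have nz: "[:q:] \<noteq> 0" using \<open>q \<noteq> 0\<close> by simp
      ultimately have "[:c':] * A = H * W'" by (rule mult_left_cancel[THEN iffD1, rotated])
      then have "H dvd [:c':] * A" by (rule dvdI)
      moreover have "tsz c' < tsz c" using tsz_less[of q c'] c' less.prems q irreducible_not_unit by blast
      ultimately show ?thesis using less.IH[of c'] c'R \<open>c' \<noteq> 0\<close> less.prems(3) by blast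
    qed
  qed
qed

lemma main_Rx:
  fixes P A B :: "'a::field mpoly poly"
  assumes IH: "\<forall>q::'a mpoly\<in>poly_ring N. irreducible q \<longrightarrow> relprime N q"
    and RP: "Rx N P" and RA: "Rx N A" and RB: "Rx N B" and irr: "irreducible P" and dv: "P dvd A * B"
  shows "P dvd A \<or> P dvd B"
proof (cases "degree P = 0")
  case True
  then obtain c where Pc: "P = [:c:]" by (rule degree_eq_zeroE)
  have "c \<in> poly_ring N" using RP Pc unfolding Rx_def by (metis coeff_pCons_0)
  have "irreducible c" using irr Pc irreducible_const_poly_iff by blast
  then have "relprime N c" using IH[rule_format, OF \<open>c \<in> poly_ring N\<close>] by blast
  then show ?thesis using const_prime_rel[OF _ RA RB] dv Pc by blast
next
  case False
  then have dP: "degree P > 0" by simp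
  have ncP: "\<forall>q\<in>poly_ring N. irreducible q \<longrightarrow> \<not> [:q:] dvd P"
    using noconst[OF irr dP] irreducible_not_unit by blast
  show ?thesis
  proof (cases "P dvd A")
    case True then show ?thesis by blast
  next
    case False
    note nA = this
    define M where "M = {U * P + V * A | U V. Rx N U \<and> Rx N V}"
    have RM: "Rx N G" if "G \<in> M" for G
      using that unfolding M_def by (auto intro!: Rx_add Rx_mult RP RA)
    have PM: "P \<in> M" unfolding M_def
      by (rule CollectI, rule exI[of _ 1], rule exI[of _ 0]) (simp add: Rx_one Rx_zero)
    have AM: "A \<in> M" unfolding M_def
      by (rule CollectI, rule exI[of _ 0], rule exI[of _ 1]) (simp add: Rx_one Rx_zero)
    have P0: "P \<noteq> 0" using irr by auto
    define d0 where "d0 = (LEAST d. \<exists>G\<in>M. G \<noteq> 0 \<and> degree G = d)"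
    have ex: "\<exists>d. \<exists>G\<in>M. G \<noteq> 0 \<and> degree G = d" using PM P0 by blast
    obtain G0 where G0: "G0 \<in> M" "G0 \<noteq> 0" "degree G0 = d0"
      using LeastI_ex[of "\<lambda>d. \<exists>G\<in>M. G \<noteq> 0 \<and> degree G = d", OF ex]
      unfolding d0_def by blast
    have minG: "d0 \<le> degree G" if "G \<in> M" "G \<noteq> 0" for G
      unfolding d0_def by (rule Least_le) (use that in blast)
    obtain U0 V0 where UV: "G0 = U0 * P + V0 * A" "Rx N U0" "Rx N V0"
      using G0(1) unfolding M_def by blast
    have RG0: "Rx N G0" using RM G0 by blast
    have lcR: "lead_coeff G0 ^ k \<in> poly_ring N" for k by (intro poly_ring_power lead_coeff_Rx RG0)
    have lc0: "lead_coeff G0 ^ k \<noteq> 0" for k using G0(2) by simp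
    have divides: "\<exists>k. G0 dvd [:lead_coeff G0 ^ k:] * X" if XM: "X \<in> M" for X
    proof -
      have "Rx N X" using RM XM by blast
      then obtain k Q r where Q: "Rx N Q" "Rx N r" "smult (lead_coeff G0 ^ k) X = Q * G0 + r"
          "r = 0 \<or> degree r < degree G0"
        using pdiv_Rx[OF RG0 G0(2), of X] by blast
      obtain U V where X: "X = U * P + V * A" "Rx N U" "Rx N V" using XM unfolding M_def by blast
      have "r = smult (lead_coeff G0 ^ k) X - Q * G0" using Q(3) by simp
      also have "\<dots> = ([:lead_coeff G0 ^ k:] * U - Q * U0) * P + ([:lead_coeff G0 ^ k:] * V - Q * V0) * A"
        unfolding X(1) UV(1) by (simp add: algebra_simps smult_add_right)
      finally have req: "r = ([:lead_coeff G0 ^ k:] * U - Q * U0) * P + ([:lead_coeff G0 ^ k:] * V - Q * V0) * A" .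
      have R1: "Rx N ([:lead_coeff G0 ^ k:] * U - Q * U0)"
        by (intro Rx_diff Rx_mult Rx_const lcR X(2) UV(2) Q(1))
      have R2: "Rx N ([:lead_coeff G0 ^ k:] * V - Q * V0)"
        by (intro Rx_diff Rx_mult Rx_const lcR X(3) UV(3) Q(1))
      have "r \<in> M" unfolding M_def using req R1 R2 by blast
      then have "r = 0" using Q(4) minG G0(3) by fastforce
      then have "[:lead_coeff G0 ^ k:] * X = G0 * Q" using Q(3) by (simp add: mult.commute)
      then show ?thesis by (intro exI[of _ k] dvdI)
    qed
    obtain kA where kA: "G0 dvd [:lead_coeff G0 ^ kA:] * A" using divides AM by blast
    obtain kP where kP: "G0 dvd [:lead_coeff G0 ^ kP:] * P" using divides PM by blast
    have "P dvd B"
    proof (cases "degree G0 = 0")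
      case False
      obtain h where h: "irreducible h" "degree h > 0" "h dvd G0"
        using exists_irreducible_dvd_deg[of G0] False by auto
      obtain w0 where w0: "G0 = h * w0" using h(3) by (rule dvdE)
      have Rh: "Rx N h" using Rx_dvd[OF RG0 G0(2) w0] .
      have nch: "\<forall>q\<in>poly_ring N. irreducible q \<longrightarrow> \<not> [:q:] dvd h"
        using noconst[OF h(1) h(2)] irreducible_not_unit by blast
      have "h dvd [:lead_coeff G0 ^ kP:] * P" using h(3) kP by (rule dvd_trans)
      then have "h dvd P" using G_rel[OF IH Rh nch lcR lc0 RP] by blast
      then obtain w where hw: "P = h * w" by (rule dvdE)
      then have "h dvd 1 \<or> w dvd 1" using irr irreducibleD by blast
      moreover have "\<not> h dvd 1" using h(1) irreducible_not_unit by blast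
      ultimately have "w dvd 1" by blast
      then obtain v where v: "1 = w * v" by (rule dvdE)
      have "h = P * v" using hw v by (metis mult.assoc mult_1_right)
      then have "P dvd h" by (rule dvdI)
      then have "P dvd G0" using h(3) by (rule dvd_trans)
      then have "P dvd [:lead_coeff G0 ^ kA:] * A" using kA by (rule dvd_trans)
      then have "P dvd A" using G_rel[OF IH RP ncP lcR lc0 RA] by blast
      then show ?thesis using nA by contradiction
    next
      case True
      then obtain c where c: "G0 = [:c:]" by (rule degree_eq_zeroE)
      have cR: "c \<in> poly_ring N" using RG0 c unfolding Rx_def by (metis coeff_pCons_0)
      have "c \<noteq> 0" using G0(2) c by simp
      have "[:c:] * B = U0 * (P * B) + V0 * (A * B)" using UV(1) c by (simp add: algebra_simps)
      moreover have "P dvd U0 * (P * B)" by simp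
      moreover have "P dvd V0 * (A * B)" using dv by (rule dvd_mult)
      ultimately have "P dvd [:c:] * B" by simp
      then show "P dvd B" using G_rel[OF IH RP ncP cR \<open>c \<noteq> 0\<close> RB] by blast
    qed
    then show ?thesis by blast
  qed
qed

lemma step_rel:
  fixes dummy :: "'a::field"
  assumes IH: "\<forall>q::'a mpoly\<in>poly_ring N. irreducible q \<longrightarrow> relprime N q"
  shows "\<forall>q\<in>poly_ring (Suc N). irreducible (q::'a mpoly) \<longrightarrow> relprime (Suc N) q"
proof (intro ballI impI)
  fix p :: "'a mpoly" assume p: "p \<in> poly_ring (Suc N)" "irreducible p"
  show "relprime (Suc N) p" unfolding relprime_def
  proof (intro ballI impI)
    fix a b assume a: "a \<in> poly_ring (Suc N)" and b: "b \<in> poly_ring (Suc N)" and dv: "p dvd a * b"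
    have irrP: "irreducible (sig p)" using p(2) sig_irreducible_iff by blast
    have dvP: "sig p dvd sig a * sig b" using dv by (simp add: sig_mult[symmetric] sig_dvd_iff)
    have "sig p dvd sig a \<or> sig p dvd sig b"
      by (rule main_Rx[OF IH Rx_sig[OF p(1)] Rx_sig[OF a] Rx_sig[OF b] irrP dvP])
    then show "p dvd a \<or> p dvd b" by (simp add: sig_dvd_iff)
  qed
qed

lemma base_rel: "\<forall>q\<in>poly_ring 0. irreducible (q::'a::field mpoly) \<longrightarrow> relprime 0 q"
proof (intro ballI impI)
  fix q :: "'a mpoly" assume q: "q \<in> poly_ring 0" "irreducible q"
  have "Poly_Mapping.keys q \<subseteq> {0}"
  proof
    fix t assume "t \<in> Poly_Mapping.keys q"
    then have "Poly_Mapping.keys t = {}" using q(1) unfolding poly_ring_iff by blast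
    then show "t \<in> {0}" by simp
  qed
  then have "tsz q = 0" by (auto simp: wdeg_0_iff tdeg_def)
  moreover have "q \<noteq> 0" using q by auto
  ultimately have "q dvd 1" using unit_iff_const by blast
  then show "relprime 0 q" using q(2) irreducible_not_unit by blast
qed

lemma all_rel: "\<forall>q\<in>poly_ring N. irreducible (q::'a::field mpoly) \<longrightarrow> relprime N q"
  by (induction N) (simp_all add: base_rel step_rel)

theorem irreducible_imp_prime_mp:
  fixes q :: "'a::field mpoly"
  assumes "irreducible q"
  shows "prime_elem q"
proof (rule prime_elemI)
  show "q \<noteq> 0" "\<not> q dvd 1" using assms by (auto dest: irreducible_not_unit)
  fix a b assume dv: "q dvd a * b"
  obtain n1 n2 n3 where "q \<in> poly_ring n1" "a \<in> poly_ring n2" "b \<in> poly_ring n3"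
    using poly_ring_exists by metis
  then have "q \<in> poly_ring (max n1 (max n2 n3))" "a \<in> poly_ring (max n1 (max n2 n3))"
    "b \<in> poly_ring (max n1 (max n2 n3))" by (auto elim!: poly_ring_mono)
  then show "q dvd a \<or> q dvd b" using all_rel assms dv unfolding relprime_def by blast
qed




lemma dvd_in_iff:
  fixes d f :: "'a::field mpoly"
  assumes "f \<in> poly_ring n" "f \<noteq> 0"
  shows "dvd_in n d f \<longleftrightarrow> d dvd f"
proof
  assume "dvd_in n d f" then show "d dvd f" unfolding dvd_in_def by (auto intro: dvdI)
next
  assume "d dvd f"
  then obtain q where q: "f = d * q" by (rule dvdE)
  then have "q \<in> poly_ring n" using poly_ring_vars[of q d n] assms by (simp add: mult.commute)
  then show "dvd_in n d f" unfolding dvd_in_def using q by blast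
qed

lemma dvd_in_zero: "dvd_in n d (0::'a::field mpoly)"
  unfolding dvd_in_def using poly_ring_zero by force

lemma unit_in_iff:
  fixes d :: "'a::field mpoly"
  shows "unit_in n d \<longleftrightarrow> d dvd 1"
  unfolding unit_in_def
  by (rule dvd_in_iff) (simp_all add: poly_ring_one)

lemma prime_dvd_prime:
  fixes p r :: "'a::field mpoly"
  assumes "prime_elem p" "prime_elem r" "r dvd p"
  shows "p dvd r"
proof -
  obtain w where w: "p = r * w" using assms(3) by (rule dvdE)
  then have "p dvd r * w" by simp
  then have "p dvd r \<or> p dvd w" using assms(1) prime_elem_dvd_multD by blast
  then show ?thesis
  proof
    assume "p dvd w"
    then obtain v where v: "w = p * v" by (rule dvdE)
    have "p * 1 = p * (r * v)" using w v by (simp add: ac_simps)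
    moreover have "p \<noteq> 0" using assms(1) by auto
    ultimately have "1 = r * v" by (rule mult_left_cancel[THEN iffD1, rotated])
    then have "r dvd 1" by (rule dvdI)
    then show ?thesis using assms(2) prime_elem_not_unit by blast
  qed
qed

lemma prime_dvd_prod_list:
  fixes q :: "'a::field mpoly"
  assumes "prime_elem q" "q dvd prod_list ps"
  shows "\<exists>p\<in>set ps. q dvd p"
  using assms(2)
proof (induction ps)
  case Nil then show ?case using assms(1) prime_elem_not_unit by auto
next
  case (Cons a ps)
  then have "q dvd a \<or> q dvd prod_list ps" using assms(1) prime_elem_dvd_multD by auto
  then show ?case using Cons.IH by auto
qed

lemma factorization:
  fixes x :: "'a::field mpoly"
  shows "x \<noteq> 0 \<Longrightarrow> x \<in> poly_ring n \<Longrightarrow> \<exists>ps. (\<forall>p\<in>set ps. prime_elem p \<and> p \<in> poly_ring n) \<and>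
            (\<forall>r. prime_elem r \<longrightarrow> r dvd x \<longrightarrow> (\<exists>p\<in>set ps. r dvd p))"
proof (induction x rule: measure_induct_rule[where f=tsz])
  case (less x)
  show ?case
  proof (cases "x dvd 1")
    case True
    have "\<not> (prime_elem r \<and> r dvd x)" for r
      using True prime_elem_not_unit[of r] dvd_trans[of r x 1] by blast
    then show ?thesis by (intro exI[of _ "[]"]) auto
  next
    case False
    obtain q where q: "irreducible q" "q dvd x"
      using exists_irreducible_dvd_mp[of x] less.prems False by blast
    from q(2) obtain x' where x': "x = q * x'" by (rule dvdE)
    have qR: "q \<in> poly_ring n" using poly_ring_vars[of q x' n] x' less.prems by simp
    have x'R: "x' \<in> poly_ring n" using poly_ring_vars[of x' q n] x' less.prems by (simp add: mult.commute)
    have "x' \<noteq> 0" using x' less.prems by auto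
    have pq: "prime_elem q" using q(1) by (rule irreducible_imp_prime_mp)
    have "tsz x' < tsz x" using tsz_less[of q x'] x' less.prems q irreducible_not_unit by blast
    then obtain ps where ps: "\<forall>p\<in>set ps. prime_elem p \<and> p \<in> poly_ring n"
        "\<forall>r. prime_elem r \<longrightarrow> r dvd x' \<longrightarrow> (\<exists>p\<in>set ps. r dvd p)"
      using less.IH[of x'] \<open>x' \<noteq> 0\<close> x'R by blast
    show ?thesis
    proof (intro exI[of _ "q # ps"] conjI allI impI)
      show "\<forall>p\<in>set (q # ps). prime_elem p \<and> p \<in> poly_ring n" using ps(1) pq qR by auto
      fix r assume r: "prime_elem r" "r dvd x"
      then have "r dvd q \<or> r dvd x'" using x' prime_elem_dvd_multD by blast
      then show "\<exists>p\<in>set (q # ps). r dvd p" using ps(2) r(1) by auto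
    qed
  qed
qed

definition cop :: "'a::field mpoly \<Rightarrow> 'a mpoly \<Rightarrow> bool" where
  "cop a b \<longleftrightarrow> \<not> (\<exists>r. prime_elem r \<and> r dvd a \<and> r dvd b)"

lemma cop_sym: "cop a b \<longleftrightarrow> cop b a"
  unfolding cop_def by blast

lemma cop_gcd:
  fixes a b :: "'a::field mpoly"
  assumes "a \<in> poly_ring n" "b \<in> poly_ring n" "a \<noteq> 0" "b \<noteq> 0" "cop a b"
  shows "gcd_one_in n {a, b}"
  unfolding gcd_one_in_def
proof (intro ballI impI)
  fix d assume d: "d \<in> poly_ring n" and dv: "\<forall>f\<in>{a, b}. dvd_in n d f"
  have "dvd_in n d a" "dvd_in n d b" using dv by auto
  then have "d dvd a" "d dvd b" by (simp_all add: dvd_in_iff[OF assms(1,3)] dvd_in_iff[OF assms(2,4)])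
  show "unit_in n d"
  proof (rule ccontr)
    assume "\<not> unit_in n d"
    then have "\<not> d dvd 1" by (simp add: unit_in_iff)
    moreover have "d \<noteq> 0" using \<open>d dvd a\<close> assms(3) by auto
    ultimately obtain q where q: "irreducible q" "q dvd d" using exists_irreducible_dvd_mp by blast
    have "prime_elem q" using q(1) by (rule irreducible_imp_prime_mp)
    moreover have "q dvd a" "q dvd b" using dvd_trans[OF q(2) \<open>d dvd a\<close>] dvd_trans[OF q(2) \<open>d dvd b\<close>] by simp_all
    ultimately show False using assms(5) unfolding cop_def by blast
  qed
qed

context
  fixes f :: "nat \<Rightarrow> ('a::field) mpoly" and n m :: nat
  assumes fR: "\<forall>i<m. f i \<in> poly_ring n"
    and g1: "gcd_one_in n (f ` {..<m})"
begin

lemma ideal_poly_ring: "h \<in> ideal_gen n m f \<Longrightarrow> h \<in> poly_ring n"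
proof -
  assume "h \<in> ideal_gen n m f"
  then obtain g where g: "h = (\<Sum>i<m. g i * f i)" "\<forall>i<m. g i \<in> poly_ring n"
    unfolding ideal_gen_def by blast
  have "g i * f i \<in> poly_ring n" if "i \<in> {..<m}" for i
    using g(2) fR that by (intro poly_ring_mult) auto
  then have "(\<Sum>i<m. g i * f i) \<in> poly_ring n" by (rule poly_ring_sum)
  then show ?thesis using g(1) by simp
qed

lemma ideal_gen_add:
  assumes "h \<in> ideal_gen n m f" "c \<in> poly_ring n" "k < m"
  shows "h + c * f k \<in> ideal_gen n m f"
proof -
  obtain g where g: "h = (\<Sum>i<m. g i * f i)" "\<forall>i<m. g i \<in> poly_ring n"
    using assms(1) unfolding ideal_gen_def by blast
  define g' where "g' i = g i + (if i = k then c else 0)" for i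
  have "(\<Sum>i<m. g' i * f i) = (\<Sum>i<m. g i * f i + (if i = k then c * f i else 0))"
    by (rule sum.cong) (simp_all add: g'_def distrib_right)
  also have "\<dots> = (\<Sum>i<m. g i * f i) + (\<Sum>i<m. (if i = k then c * f i else 0))"
    by (rule sum.distrib)
  also have "(\<Sum>i<m. (if i = k then c * f i else 0)) = c * f k"
    using assms(3) by (subst sum.delta) simp_all
  finally have "h + c * f k = (\<Sum>i<m. g' i * f i)" using g(1) by simp
  moreover have "\<forall>i<m. g' i \<in> poly_ring n"
    using g(2) assms(2) by (auto simp: g'_def intro: poly_ring_add poly_ring_zero)
  ultimately show ?thesis unfolding ideal_gen_def by blast
qed

lemma ideal_gen_zero: "(0::'a mpoly) \<in> ideal_gen n m f"
proof -
  have "(0::'a mpoly) = (\<Sum>i<m. (\<lambda>_. 0) i * f i)" by simp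
  moreover have "\<forall>i<m. (\<lambda>_. 0::'a mpoly) i \<in> poly_ring n" by (simp add: poly_ring_zero)
  ultimately show ?thesis unfolding ideal_gen_def by (intro CollectI exI[of _ "\<lambda>_. 0"] conjI)
qed

lemma ideal_gen_f: "k < m \<Longrightarrow> f k \<in> ideal_gen n m f"
  using ideal_gen_add[OF ideal_gen_zero poly_ring_one] by simp

lemma exists_nonzero: "\<exists>k<m. f k \<noteq> 0"
proof (rule ccontr)
  assume "\<not> (\<exists>k<m. f k \<noteq> 0)"
  then have z: "\<forall>k<m. f k = 0" by blast
  have "dvd_in n 0 x" if "x \<in> f ` {..<m}" for x
  proof -
    from that z have "x = 0" by auto
    then show ?thesis by (simp add: dvd_in_zero)
  qed
  moreover have "(0::'a mpoly) \<in> poly_ring n" by (rule poly_ring_zero)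
  ultimately have "unit_in n (0::'a mpoly)" using g1 unfolding gcd_one_in_def by blast
  then show False by (simp add: unit_in_iff)
qed

lemma prime_not_all:
  assumes "prime_elem q"
  shows "\<exists>k<m. \<not> q dvd f k"
proof (rule ccontr)
  assume "\<not> (\<exists>k<m. \<not> q dvd f k)"
  then have all: "\<forall>k<m. q dvd f k" by blast
  obtain k0 where k0: "k0 < m" "f k0 \<noteq> 0" using exists_nonzero by blast
  from all k0(1) have "q dvd f k0" by blast
  then obtain w where w: "f k0 = q * w" by (rule dvdE)
  have "q * w \<in> poly_ring n" "q * w \<noteq> 0" using fR k0 w by auto
  then have qR: "q \<in> poly_ring n" by (rule poly_ring_vars)
  have "\<forall>x\<in>f ` {..<m}. dvd_in n q x"
  proof
    fix x assume "x \<in> f ` {..<m}"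
    then obtain k where k: "k < m" "x = f k" by auto
    show "dvd_in n q x"
    proof (cases "x = 0")
      case True then show ?thesis by (simp add: dvd_in_zero)
    next
      case False then show ?thesis using dvd_in_iff[of x n q] k fR all by auto
    qed
  qed
  then have "unit_in n q" using g1 qR unfolding gcd_one_in_def by blast
  then show False using assms prime_elem_not_unit by (auto simp: unit_in_iff)
qed

lemma avoid:
  "(\<forall>p\<in>set ps. prime_elem p \<and> p \<in> poly_ring n) \<Longrightarrow>
    \<exists>h\<in>ideal_gen n m f. h \<noteq> 0 \<and> (\<forall>p\<in>set ps. \<not> p dvd h)"
proof (induction ps)
  case Nil
  obtain k0 where "k0 < m" "f k0 \<noteq> 0" using exists_nonzero by blast
  then show ?case using ideal_gen_f by auto
next
  case (Cons q ps)
  then obtain h where h: "h \<in> ideal_gen n m f" "h \<noteq> 0" "\<forall>p\<in>set ps. \<not> p dvd h" by auto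
  have pq: "prime_elem q" "q \<in> poly_ring n" using Cons.prems by auto
  show ?case
  proof (cases "q dvd h")
    case False then show ?thesis using h by auto
  next
    case True
    obtain k where k: "k < m" "\<not> q dvd f k" using prime_not_all[OF pq(1)] by blast
    let ?h = "h + prod_list ps * f k"
    have PR: "prod_list ps \<in> poly_ring n"
      using Cons.prems by (induction ps) (auto intro: poly_ring_mult poly_ring_one)
    have hI: "?h \<in> ideal_gen n m f" by (rule ideal_gen_add[OF h(1) PR k(1)])
    have ps_ndvd: "\<not> p dvd ?h" if "p \<in> set ps" for p
    proof
      assume "p dvd ?h"
      moreover have "p dvd prod_list ps * f k" using prod_list_dvd[OF that] by (rule dvd_mult2)
      ultimately have "p dvd h" by (simp add: dvd_add_left_iff)
      then show False using h(3) that by blast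
    qed
    have q_ndvd: "\<not> q dvd ?h"
    proof
      assume "q dvd ?h"
      then have "q dvd prod_list ps * f k" using True by (simp add: dvd_add_right_iff)
      then have "q dvd prod_list ps \<or> q dvd f k" using pq(1) prime_elem_dvd_multD by blast
      then have "q dvd prod_list ps" using k(2) by blast
      then obtain p where p: "p \<in> set ps" "q dvd p" using prime_dvd_prod_list[OF pq(1)] by blast
      then have "p dvd q" using prime_dvd_prime[of p q] Cons.prems pq(1) by auto
      then have "p dvd h" using dvd_trans[OF _ True] by blast
      then show False using h(3) p(1) by blast
    qed
    have "?h \<noteq> 0" using q_ndvd by auto
    then show ?thesis using hI ps_ndvd q_ndvd by auto
  qed
qed

lemma next_elem:
  assumes "\<forall>x\<in>set L. x \<in> poly_ring n \<and> x \<noteq> 0"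
  shows "\<exists>h. h \<in> ideal_gen n m f \<and> h \<noteq> 0 \<and> (\<forall>x\<in>set L. cop h x)"
proof -
  have P0: "prod_list L \<noteq> 0" using assms by (auto simp: prod_list_zero_iff)
  have PR: "prod_list L \<in> poly_ring n"
    using assms by (induction L) (auto intro: poly_ring_mult poly_ring_one)
  obtain ps where ps: "\<forall>p\<in>set ps. prime_elem p \<and> p \<in> poly_ring n"
      "\<forall>r. prime_elem r \<longrightarrow> r dvd prod_list L \<longrightarrow> (\<exists>p\<in>set ps. r dvd p)"
    using factorization[OF P0 PR] by blast
  obtain h where h: "h \<in> ideal_gen n m f" "h \<noteq> 0" "\<forall>p\<in>set ps. \<not> p dvd h"
    using avoid[OF ps(1)] by blast
  have "cop h x" if "x \<in> set L" for x
    unfolding cop_def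
  proof
    assume "\<exists>r. prime_elem r \<and> r dvd h \<and> r dvd x"
    then obtain r where r: "prime_elem r" "r dvd h" "r dvd x" by blast
    have "r dvd prod_list L" using dvd_trans[OF r(3) prod_list_dvd[OF that]] .
    then obtain p where p: "p \<in> set ps" "r dvd p" using ps(2) r(1) by blast
    then have "p dvd r" using prime_dvd_prime[of p r] ps(1) r(1) by auto
    then have "p dvd h" using dvd_trans[OF _ r(2)] by blast
    then show False using h(3) p(1) by blast
  qed
  then show ?thesis using h by blast
qed

end


theorem lemma3p4:
  fixes f :: "nat \<Rightarrow> ('a::field) mpoly" and n m :: nat
  assumes "m \<ge> 2"
    and "\<forall>i<m. f i \<in> poly_ring n"
    and "gcd_one_in n (f ` {..<m})"
  shows "\<exists>h :: nat \<Rightarrow> 'a mpoly. (\<forall>i. h i \<in> ideal_gen n m f) \<and>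
           (\<forall>i j. i \<noteq> j \<longrightarrow> gcd_one_in n {h i, h j})"
proof -
  note fR = assms(2) and g1 = assms(3)
  let ?I = "ideal_gen n m f"
  define Good where "Good L \<longleftrightarrow> (\<forall>x\<in>set L. x \<in> ?I \<and> x \<noteq> 0) \<and>
      (\<forall>i j. i < j \<longrightarrow> j < length L \<longrightarrow> cop (L ! j) (L ! i))" for L
  define nxt where "nxt L = (SOME h. h \<in> ?I \<and> h \<noteq> 0 \<and> (\<forall>x\<in>set L. cop h x))" for L
  define seq where "seq k = ((\<lambda>L. L @ [nxt L]) ^^ k) []" for k
  have seq_Suc: "seq (Suc k) = seq k @ [nxt (seq k)]" for k by (simp add: seq_def)
  have nx: "nxt L \<in> ?I \<and> nxt L \<noteq> 0 \<and> (\<forall>x\<in>set L. cop (nxt L) x)" if "Good L" for L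
  proof -
    have "\<forall>x\<in>set L. x \<in> poly_ring n \<and> x \<noteq> 0"
      using that ideal_poly_ring[OF fR g1] unfolding Good_def by blast
    from next_elem[OF fR g1 this] show ?thesis unfolding nxt_def by (rule someI_ex)
  qed
  have good: "Good (seq k) \<and> length (seq k) = k" for k
  proof (induction k)
    case 0 then show ?case by (simp add: seq_def Good_def)
  next
    case (Suc k)
    then have G: "Good (seq k)" and len: "length (seq k) = k" by auto
    have N: "nxt (seq k) \<in> ?I" "nxt (seq k) \<noteq> 0" "\<forall>x\<in>set (seq k). cop (nxt (seq k)) x"
      using nx[OF G] by auto
    have Gs: "\<forall>x\<in>set (seq k). x \<in> ?I \<and> x \<noteq> 0" using G unfolding Good_def by (rule conjunct1)
    have Gc0: "\<forall>i j. i < j \<longrightarrow> j < length (seq k) \<longrightarrow> cop (seq k ! j) (seq k ! i)"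
      using G unfolding Good_def by (rule conjunct2)
    have Gc: "cop (seq k ! j) (seq k ! i)" if "i < j" "j < k" for i j
      using Gc0 that len by simp
    have lenS: "length (seq (Suc k)) = Suc k" using len by (simp add: seq_Suc)
    have C: "cop (seq (Suc k) ! j) (seq (Suc k) ! i)" if ij: "i < j" "j < Suc k" for i j
    proof (cases "j < k")
      case True
      have "seq (Suc k) ! j = seq k ! j" "seq (Suc k) ! i = seq k ! i"
        using True ij len by (simp_all add: seq_Suc nth_append)
      moreover have "cop (seq k ! j) (seq k ! i)" using Gc ij True by simp
      ultimately show ?thesis by simp
    next
      case False
      then have jk: "j = k" using ij by simp
      have e1: "seq (Suc k) ! j = nxt (seq k)" using jk len by (simp add: seq_Suc nth_append)
      have e2: "seq (Suc k) ! i = seq k ! i" using ij jk len by (simp add: seq_Suc nth_append)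
      have "seq k ! i \<in> set (seq k)" using ij jk len by simp
      then have "cop (nxt (seq k)) (seq k ! i)" using N(3) by (rule bspec[rotated])
      then show ?thesis unfolding e1 e2 .
    qed
    have S: "\<forall>x\<in>set (seq (Suc k)). x \<in> ?I \<and> x \<noteq> 0"
      using Gs N(1,2) by (simp add: seq_Suc)
    have C': "\<forall>i j. i < j \<longrightarrow> j < length (seq (Suc k)) \<longrightarrow> cop (seq (Suc k) ! j) (seq (Suc k) ! i)"
      unfolding lenS using C by simp
    have "Good (seq (Suc k))" unfolding Good_def using S C' by (rule conjI)
    then show ?case using lenS by (rule conjI)
  qed
  have stable: "\<forall>i. i < k \<longrightarrow> seq k ! i = seq (Suc i) ! i" for k
  proof (induction k)
    case 0 then show ?case by simp
  next
    case (Suc k)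
    show ?case
    proof (intro allI impI)
      fix i assume "i < Suc k"
      show "seq (Suc k) ! i = seq (Suc i) ! i"
      proof (cases "i < k")
        case True
        have "length (seq k) = k" using good[of k] by (rule conjunct2)
        then have "seq (Suc k) ! i = seq k ! i" using True by (simp add: seq_Suc nth_append)
        also have "\<dots> = seq (Suc i) ! i" using Suc.IH True by simp
        finally show ?thesis .
      next
        case False
        then have "i = k" using \<open>i < Suc k\<close> by simp
        then show ?thesis by simp
      qed
    qed
  qed
  define h where "h i = seq (Suc i) ! i" for i
  have hI: "h i \<in> ?I \<and> h i \<noteq> 0" for i
  proof -
    have "length (seq (Suc i)) = Suc i" using good[of "Suc i"] by (rule conjunct2)
    then have "h i \<in> set (seq (Suc i))" unfolding h_def by simp
    moreover have "\<forall>x\<in>set (seq (Suc i)). x \<in> ?I \<and> x \<noteq> 0"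
      using conjunct1[OF good[of "Suc i"]] unfolding Good_def by (rule conjunct1)
    ultimately show ?thesis by (rule bspec[rotated])
  qed
  have hcop: "cop (h j) (h i)" if "i < j" for i j
  proof -
    have e1: "seq (Suc j) ! i = h i" unfolding h_def using stable[of "Suc j"] that by simp
    have e2: "seq (Suc j) ! j = h j" unfolding h_def by simp
    have "\<forall>i' j'. i' < j' \<longrightarrow> j' < length (seq (Suc j)) \<longrightarrow> cop (seq (Suc j) ! j') (seq (Suc j) ! i')"
      using conjunct1[OF good[of "Suc j"]] unfolding Good_def by (rule conjunct2)
    moreover have "length (seq (Suc j)) = Suc j" using good[of "Suc j"] by (rule conjunct2)
    ultimately have "cop (seq (Suc j) ! j) (seq (Suc j) ! i)" using that by simp
    then show ?thesis unfolding e1 e2 .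
  qed
  have hR: "h i \<in> poly_ring n" for i using ideal_poly_ring[OF fR g1 conjunct1[OF hI[of i]]] .
  have "gcd_one_in n {h i, h j}" if "i \<noteq> j" for i j
  proof (cases "i < j")
    case True
    have "gcd_one_in n {h j, h i}"
      by (rule cop_gcd[OF hR hR conjunct2[OF hI] conjunct2[OF hI] hcop[OF True]])
    then show ?thesis by (simp add: insert_commute)
  next
    case False
    then have "j < i" using that by simp
    show ?thesis
      by (rule cop_gcd[OF hR hR conjunct2[OF hI] conjunct2[OF hI] hcop[OF \<open>j < i\<close>]])
  qed
  moreover have "\<forall>i. h i \<in> ?I" using hI by simp
  ultimately show ?thesis by blast
qed

end
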